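(* Let $k\ge 4$, $n=2k-1$, $\lambda\in\overline{\mathcal{U}}_{T_n}$, and let $Y=\mathrm{KN}(S_\lambda)$, with $R_i$ its $i$-th row and $C_j$ its $j$-th column. Write the elements of $S_\lambda$ increasingly as $0=s_0<s_1<\cdots$ and let $z$ be the index with $s_z=n-2$. Then $\#R_i=\#C_i+1$ for every $1\le i\le z$, and $\#R_i=\#C_{i+1}$ for every $z+1\le i\le n-2$.
   Context: A partition of $N$ into distinct parts is a sequence $\lambda=(\lambda_1<\dots<\lambda_t)$ of positive integers with sum $N$ and $t\ge 2$, identified with its set of parts. Missing parts: $\mathcal{M}_\lambda=\{1,\dots,\lambda_t\}\setminus\lambda$. $\lambda$ is refinable if two distinct missing parts sum to a part of $\lambda$, unrefinable otherwise; $\mathcal{U}_N$ is the set of unrefinable partitions of $N$. An element of $\mathcal{U}_N$ is maximal if its largest part is the maximum of the largest parts of elements of $\mathcal{U}_N$; $\widetilde{\mathcal{U}}_N$ is the set of these and $\overline{\mathcal{U}}_N=\{\lambda\in\widetilde{\mathcal{U}}_N:\#\mathcal{M}_\lambda=\lfloor\lambda_t/2\rfloor\}$. $T_n=n(n+1)/2$. For $\lambda\in\overline{\mathcal{U}}_{T_n}$ (with $n=2k-1$, $k\ge 4$) one knows $\lambda_t=2n-4$, $t=n-2$ and $n-2\notin\lambda$. $S_\lambda=\mathbb{N}_0\setminus\lambda$. The Keith–Nath transformation sends a set $S\subseteq\mathbb{N}_0$ with $0\in S$ and finite complement to the Young diagram $\mathrm{KN}(S)$ whose boundary is the lattice path that,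 starting at the origin, takes for $j=0,1,\dots,\max(\mathbb{N}_0\setminus S)$ an east step if $j\in S$ and a north step otherwise. Diagrams are in English convention: rows numbered from the top, columns from the left; $\#R_i$, $\#C_j$ denote numbers of cells. *)

theory Defs
  imports Main "HOL-Library.Infinite_Set"
begin

(* A partition of N into distinct parts, identified with its (finite) set of parts;
   at least two parts. *)
definition distinct_partition :: "nat \<Rightarrow> nat set \<Rightarrow> bool" where
  "distinct_partition N lam \<longleftrightarrow>
     finite lam \<and> 0 \<notin> lam \<and> \<Sum>lam = N \<and> card lam \<ge> 2"

definition missing :: "nat set \<Rightarrow> nat set" where
  "missing lam = {1..Max lam} - lam"

definition refinable :: "nat set \<Rightarrow> bool" where
  "refinable lam \<longleftrightarrow> (\<exists>a\<in>missing lam. \<exists>b\<in>missing lam. a \<noteq> b \<and> a + b \<in> lam)"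

definition unrefinable_parts :: "nat \<Rightarrow> nat set set" where
  "unrefinable_parts N = {lam. distinct_partition N lam \<and> \<not> refinable lam}"

definition maximal_unrefinable :: "nat \<Rightarrow> nat set set" where
  "maximal_unrefinable N =
     {lam \<in> unrefinable_parts N. Max lam = Max (Max ` unrefinable_parts N)}"

definition Ubar :: "nat \<Rightarrow> nat set set" where
  "Ubar N = {lam \<in> maximal_unrefinable N. card (missing lam) = Max lam div 2}"

definition tri :: "nat \<Rightarrow> nat" where
  "tri n = n * (n + 1) div 2"

definition Sset :: "nat set \<Rightarrow> nat set" where
  "Sset lam = UNIV - lam"

(* The lattice path: step number j (j = 0..max gap)
   starts at the point (x_j, y_j) with x_j = #{s in S. s < j} and
   y_j = #{g not in S. g < j}; it is an east step if j in S, a north step otherwise.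
   The path ends at height b = #(N_0 \ S).  The Young diagram (English convention)
   consists of the unit cells to the left of the path, below height b:
   the cell in row i (from the top) and column j (from the left) is the unit square
   [j-1,j] x [b-i, b-i+1]; it belongs to the diagram iff it lies left of the
   north step at height b-i, i.e. j <= x_g for the gap g with y_g = b - i. *)
definition KN :: "nat set \<Rightarrow> (nat \<times> nat) set" where
  "KN S = {(i, j). 1 \<le> i \<and> i \<le> card (UNIV - S) \<and> 1 \<le> j \<and>
     (\<exists>g. g \<notin> S \<and> card {h. h \<notin> S \<and> h < g} = card (UNIV - S) - i
          \<and> j \<le> card {s \<in> S. s < g})}"

definition row_card :: "(nat \<times> nat) set \<Rightarrow> nat \<Rightarrow> nat" where
  "row_card Y i = card {j. (i, j) \<in> Y}"

definition col_card :: "(nat \<times> nat) set \<Rightarrow> nat \<Rightarrow> nat" where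
  "col_card Y j = card {i. (i, j) \<in> Y}"

end

theory Submission imports Defs begin

lemma enum_card:
  fixes S :: "nat set" assumes S: "infinite S"
  shows "card {s\<in>S. s < enumerate S k} = k"
proof -
  have "{s\<in>S. s < enumerate S k} = enumerate S ` {..<k}"
  proof (rule set_eqI, rule iffI)
    fix s assume "s \<in> {s\<in>S. s < enumerate S k}"
    then obtain j where "enumerate S j = s" "s\<in>S" "s < enumerate S k"
      using enumerate_Ex[OF S] by auto
    then show "s \<in> enumerate S ` {..<k}" using S by auto
  next
    fix s assume "s \<in> enumerate S ` {..<k}"
    then show "s \<in> {s\<in>S. s < enumerate S k}" using S enumerate_in_set by auto
  qed
  moreover have "inj_on (enumerate S) {..<k}"
    using inj_on_subset[OF inj_enumerate[OF S] subset_UNIV] .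
  ultimately show ?thesis by (simp add: card_image)
qed

lemma fin_below: "finite {s\<in>(S::nat set). s < g}"
  by (rule finite_subset[of _ "{..<g}"]) auto

lemma enum_le_card:
  fixes S :: "nat set" assumes S: "infinite S" and j: "0 < j"
  shows "(j \<le> card {s\<in>S. s < g}) = (enumerate S (j-1) < g)"
proof
  assume a: "j \<le> card {s\<in>S. s < g}"
  show "enumerate S (j-1) < g"
  proof (rule ccontr)
    assume "\<not> enumerate S (j-1) < g"
    then have "{s\<in>S. s<g} \<subseteq> {s\<in>S. s < enumerate S (j-1)}" by auto
    then have "card {s\<in>S. s<g} \<le> card {s\<in>S. s < enumerate S (j-1)}"
      by (rule card_mono[OF fin_below])
    then show False using a j enum_card[OF S, of "j-1"] by simp
  qed
next
  assume a: "enumerate S (j-1) < g"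
  have "enumerate S ` {..<j} \<subseteq> {s\<in>S. s<g}"
  proof
    fix x assume "x \<in> enumerate S ` {..<j}"
    then obtain i where i: "i < j" "x = enumerate S i" by auto
    then have "enumerate S i \<le> enumerate S (j-1)" using S by simp
    then show "x \<in> {s\<in>S. s<g}" using i a enumerate_in_set[OF S] by auto
  qed
  then have "card (enumerate S ` {..<j}) \<le> card {s\<in>S. s<g}"
    by (rule card_mono[OF fin_below])
  moreover have "inj_on (enumerate S) {..<j}"
    using inj_on_subset[OF inj_enumerate[OF S] subset_UNIV] .
  ultimately show "j \<le> card {s\<in>S. s < g}" by (simp add: card_image)
qed


lemma sym_struct:
  fixes lam :: "nat set"
  assumes fin: "finite lam" and z: "0 \<notin> lam" and ne: "lam \<noteq> {}"
    and nr: "\<not> refinable lam" and cm: "card (missing lam) = Max lam div 2"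
  shows "\<And>x. 0 < x \<Longrightarrow> x < Max lam \<Longrightarrow> 2*x \<noteq> Max lam \<Longrightarrow> (x \<in> lam \<longleftrightarrow> Max lam - x \<notin> lam)"
    and "even (Max lam) \<Longrightarrow> Max lam div 2 \<notin> lam"
proof -
  define m where "m = Max lam"
  have mlam: "m \<in> lam" using fin ne m_def by simp
  have ub: "\<And>x. x \<in> lam \<Longrightarrow> x \<le> m" using fin m_def by simp
  have mis: "missing lam = {1..m} - lam" unfolding missing_def m_def by simp
  have nb: "\<And>a b. a \<in> missing lam \<Longrightarrow> b \<in> missing lam \<Longrightarrow> a \<noteq> b \<Longrightarrow> a + b \<notin> lam"
    using nr unfolding refinable_def by blast
  define f where "f x = min x (m - x)" for x
  have inj: "inj_on f (missing lam)"
  proof (rule inj_onI)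
    fix a b assume a: "a \<in> missing lam" and b: "b \<in> missing lam" and e: "f a = f b"
    show "a = b"
    proof (rule ccontr)
      assume ne: "a \<noteq> b"
      have "a \<le> m" "b \<le> m" using a b mis by auto
      then have "a + b = m" using e ne unfolding f_def by (auto simp: min_def split: if_splits)
      then show False using nb[OF a b ne] mlam by simp
    qed
  qed
  have sub: "f ` missing lam \<subseteq> {1..m div 2}"
  proof
    fix y assume "y \<in> f ` missing lam"
    then obtain a where a: "a \<in> missing lam" "y = f a" by auto
    then have "1 \<le> a" "a \<le> m" "a \<noteq> m" using mis mlam by auto
    then show "y \<in> {1..m div 2}" using a unfolding f_def by (auto simp: min_def)
  qed
  have eq: "f ` missing lam = {1..m div 2}"
    using card_subset_eq[OF _ sub] inj cm m_def card_image by (simp add: card_image)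
  show "\<And>x. 0 < x \<Longrightarrow> x < Max lam \<Longrightarrow> 2*x \<noteq> Max lam \<Longrightarrow> (x \<in> lam \<longleftrightarrow> Max lam - x \<notin> lam)"
  proof -
    fix x assume x: "0 < x" "x < Max lam" "2*x \<noteq> Max lam"
    show "(x \<in> lam \<longleftrightarrow> Max lam - x \<notin> lam)"
    proof
      assume xl: "x \<in> lam" show "Max lam - x \<notin> lam"
      proof
        assume yl: "Max lam - x \<in> lam"
        have "f x \<in> {1..m div 2}" using x unfolding f_def m_def by (auto simp: min_def)
        then obtain a where a: "a \<in> missing lam" "f a = f x" using eq by (metis imageE)
        have "a \<le> m" using a mis by auto
        then have "a = x \<or> a = m - x" using a x unfolding f_def m_def by (auto simp: min_def split: if_splits)
        then show False using a xl yl mis m_def by auto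
      qed
    next
      assume yl: "Max lam - x \<notin> lam"
      show "x \<in> lam"
      proof (rule ccontr)
        assume "x \<notin> lam"
        then have "x \<in> missing lam" "m - x \<in> missing lam" using x yl mis m_def by auto
        moreover have "x \<noteq> m - x" using x m_def by auto
        ultimately have "x + (m - x) \<notin> lam" using nb by blast
        then show False using x mlam m_def by simp
      qed
    qed
  qed
  show "even (Max lam) \<Longrightarrow> Max lam div 2 \<notin> lam"
  proof -
    assume ev: "even (Max lam)"
    have "m \<ge> 1" using mlam z by (cases m) auto
    then have "m \<ge> 2" using ev m_def by presburger
    then have "m div 2 \<in> {1..m div 2}" by auto
    then obtain a where a: "a \<in> missing lam" "f a = m div 2" using eq by (metis imageE)
    have "a \<le> m" using a mis by auto
    then have "a = m div 2" using a ev m_def unfolding f_def by (auto simp: min_def split: if_splits)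
    then show "Max lam div 2 \<notin> lam" using a mis m_def by auto
  qed
qed


lemma sum_struct:
  fixes lam :: "nat set"
  assumes fin: "finite lam" and z: "0 \<notin> lam" and mlam: "m \<in> lam"
    and ub: "\<And>x. x \<in> lam \<Longrightarrow> x \<le> m"
    and symm: "\<And>x. 0 < x \<Longrightarrow> x < m \<Longrightarrow> 2*x \<noteq> m \<Longrightarrow> (x \<in> lam \<longleftrightarrow> m - x \<notin> lam)"
    and ev: "even m \<Longrightarrow> m div 2 \<notin> lam"
  shows "\<Sum>lam = m + \<Sum>{1..(m-1) div 2} + (\<Sum>x\<in>lam-{m}. x - min x (m-x))"
proof -
  define f where "f x = min x (m - x)" for x
  define L where "L = lam - {m}"
  have finL: "finite L" using fin L_def by simp
  have bij: "bij_betw f L {1..(m-1) div 2}"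
  proof (rule bij_betw_imageI)
    show "inj_on f L"
    proof (rule inj_onI)
      fix a b assume a: "a \<in> L" and b: "b \<in> L" and e: "f a = f b"
      show "a = b"
      proof (rule ccontr)
        assume ne: "a \<noteq> b"
        have "a \<le> m" "b \<le> m" "a \<noteq> m" "b \<noteq> m" "a > 0" using a b ub z L_def by (auto intro: gr0I)
        then have "b = m - a" using e ne unfolding f_def by (auto simp: min_def split: if_splits)
        moreover have "2*a \<noteq> m" using ev a L_def by auto
        ultimately show False using symm[of a] a b L_def \<open>a > 0\<close> \<open>a \<le> m\<close> \<open>a \<noteq> m\<close> by auto
      qed
    qed
    show "f ` L = {1..(m-1) div 2}"
    proof
      show "f ` L \<subseteq> {1..(m-1) div 2}"
      proof
        fix y assume "y \<in> f ` L"
        then obtain a where a: "a \<in> L" "y = f a" by auto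
        have "a \<le> m" "a \<noteq> m" "a > 0" using a ub z L_def by (auto intro: gr0I)
        moreover have "2*a \<noteq> m" using ev a L_def by auto
        ultimately show "y \<in> {1..(m-1) div 2}" using a unfolding f_def by (auto simp: min_def)
      qed
      show "{1..(m-1) div 2} \<subseteq> f ` L"
      proof
        fix j assume j: "j \<in> {1..(m-1) div 2}"
        then have j1: "2*j < m" "0 < j" "j < m" "2*j \<noteq> m" "m - j < m" "0 < m - j" "2*(m-j) \<noteq> m" by auto
        show "j \<in> f ` L"
        proof (cases "j \<in> lam")
          case True
          then have "j \<in> L" "f j = j" using j1 L_def f_def by auto
          then show ?thesis by force
        next
          case False
          then have "m - j \<in> lam" using symm[of j] j1 by auto
          then have "m - j \<in> L" "f (m - j) = j" using j1 L_def f_def by (auto simp: min_def)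
          then show ?thesis by (metis imageI)
        qed
      qed
    qed
  qed
  have "\<Sum>lam = m + \<Sum>L" using fin mlam L_def by (simp add: sum.remove)
  also have "\<Sum>L = (\<Sum>x\<in>L. f x + (x - f x))"
    by (rule sum.cong) (auto simp: f_def)
  also have "\<dots> = (\<Sum>x\<in>L. f x) + (\<Sum>x\<in>L. x - f x)" by (simp add: sum.distrib)
  also have "(\<Sum>x\<in>L. f x) = \<Sum>{1..(m-1) div 2}"
    using sum.reindex_bij_betw[OF bij, of "\<lambda>x. x"] by simp
  finally show ?thesis unfolding L_def f_def by simp
qed

lemma even_D:
  fixes m :: nat assumes "even m" and bd: "\<And>x. x \<in> L \<Longrightarrow> x \<le> m"
  shows "even (\<Sum>x\<in>L. x - min x (m-x))"
proof (rule dvd_sum)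
  fix x assume xL: "x \<in> L" show "2 dvd (x - min x (m - x))"
  proof (cases "x \<le> m - x")
    case True then show ?thesis by (simp add: min_def)
  next
    case False then have "x - min x (m - x) = 2*x - m" using bd[OF xL] by (subst min_absorb2; linarith)
    then show ?thesis using assms by simp
  qed
qed

lemma odd_D:
  fixes m :: nat assumes om: "odd m" and fin: "finite L" and bd: "\<And>x. x \<in> L \<Longrightarrow> x \<le> m"
  shows "(\<Sum>x\<in>L. x - min x (m-x)) \<noteq> 2"
proof -
  define d where "d x = x - min x (m - x)" for x
  define B where "B = {x\<in>L. 0 < d x}"
  have finB: "finite B" using fin B_def by simp
  have dodd: "\<And>x. x \<in> B \<Longrightarrow> odd (d x) \<and> d x = 2*x - m"
  proof -
    fix x assume "x \<in> B"
    then have "0 < d x" using B_def by simp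
    then have "\<not> x \<le> m - x" unfolding d_def by (auto simp: min_def)
    moreover have "x \<le> m" using bd \<open>x \<in> B\<close> B_def by auto
    ultimately have "d x = 2*x - m" unfolding d_def by (subst min_absorb2; linarith)
    moreover have "2*x > m" using \<open>\<not> x \<le> m - x\<close> by simp
    ultimately show "odd (d x) \<and> d x = 2*x - m" using om by simp
  qed
  have sB: "(\<Sum>x\<in>L. d x) = (\<Sum>x\<in>B. d x)"
    by (rule sum.mono_neutral_right) (use fin in \<open>auto simp: B_def\<close>)
  have "(\<Sum>x\<in>B. d x) \<noteq> 2"
  proof (cases "B = {}")
    case True then show ?thesis by simp
  next
    case False
    then obtain x where x: "x \<in> B" by auto
    show ?thesis
    proof (cases "B = {x}")
      case True then show ?thesis using dodd[OF x] by auto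
    next
      case False
      then obtain y where y: "y \<in> B" "y \<noteq> x" using x by auto
      have dd: "d x = 2*x - m" "d y = 2*y - m" "odd (d x)" "odd (d y)" using dodd[OF x] dodd[OF y(1)] by auto
      have "0 < d x" "0 < d y" using odd_pos[OF dd(3)] odd_pos[OF dd(4)] by auto
      then have "d x \<noteq> d y" using dd(1,2) y(2) by linarith
      then have "d x + d y \<ge> 4" using dd(3,4) by presburger
      moreover have "(\<Sum>z\<in>{x,y}. d z) \<le> (\<Sum>z\<in>B. d z)"
        by (rule sum_mono2) (use finB x y in auto)
      ultimately show ?thesis using y by auto
    qed
  qed
  then show ?thesis using sB d_def by simp
qed


lemma dgauss: "2 * \<Sum>{1..(p::nat)} = p * (p + 1)"
  by (induction p) (auto simp: algebra_simps)

lemma fin_U: "finite (unrefinable_parts N)"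
proof (rule finite_subset[of _ "Pow {0..N}"])
  show "unrefinable_parts N \<subseteq> Pow {0..N}"
  proof
    fix l assume "l \<in> unrefinable_parts N"
    then have fl: "finite l" and s: "\<Sum>l = N"
      unfolding unrefinable_parts_def distinct_partition_def by auto
    have "\<And>x. x \<in> l \<Longrightarrow> x \<le> N" using member_le_sum[of _ l "\<lambda>x. x"] fl s by auto
    then show "l \<in> Pow {0..N}" by auto
  qed
qed simp

lemma witness:
  fixes n :: nat assumes n7: "n \<ge> 7"
  shows "{1..n-3} \<union> {n+1, 2*n-4} \<in> unrefinable_parts (tri n)"
    and "Max ({1..n-3} \<union> {n+1, 2*n-4}) = 2*n-4"
proof -
  define mu where "mu = {1..n-3} \<union> {n+1, 2*n-4}"
  have fin: "finite mu" unfolding mu_def by simp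
  have mx: "Max mu = 2*n-4"
    by (rule Max_eqI) (use n7 in \<open>auto simp: mu_def\<close>)
  then show "Max ({1..n-3} \<union> {n+1, 2*n-4}) = 2*n-4" unfolding mu_def .
  obtain q where q: "n = q + 7" using n7 by (metis add.commute le_add_diff_inverse)
  have e: "mu = insert (n+1) (insert (2*n-4) {1..n-3})" unfolding mu_def by auto
  have n1: "n+1 \<notin> insert (2*n-4) {1..n-3}" using n7 by auto
  have n2: "2*n-4 \<notin> {1..n-3}" using n7 by auto
  have "\<Sum>mu = (n+1) + ((2*n-4) + \<Sum>{1..n-3})"
    unfolding e by (simp only: sum.insert[OF _ n1] sum.insert[OF _ n2] finite_atLeastAtMost finite_insert)
  then have "\<Sum>mu = \<Sum>{1..n-3} + (n+1) + (2*n-4)" by simp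
  then have "\<Sum>mu = \<Sum>{1..q+4} + (q+8) + (2*q+10)" using q by (simp add: add.commute)
  then have "2 * \<Sum>mu = (q+4)*(q+5) + 2*(q+8) + 2*(2*q+10)"
    using dgauss[of "q+4"] by (simp add: algebra_simps)
  then have "2 * \<Sum>mu = n * (n+1)" using q by (simp add: algebra_simps)
  then have sm: "\<Sum>mu = tri n" unfolding tri_def by simp
  have "{n+1, 2*n-4} \<subseteq> mu" unfolding mu_def by auto
  then have "card {n+1, 2*n-4} \<le> card mu" using fin by (rule card_mono[rotated])
  then have c2: "card mu \<ge> 2" using n7 by simp
  have nr: "\<not> refinable mu"
  proof
    assume "refinable mu"
    then obtain a b where ab: "a \<in> missing mu" "b \<in> missing mu" "a \<noteq> b" "a + b \<in> mu"
      unfolding refinable_def by blast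
    have "a \<ge> n - 2" "b \<ge> n - 2" using ab unfolding missing_def mu_def by auto
    then have "a + b > 2*n - 4" using ab(3) n7 by linarith
    moreover have "a + b \<le> Max mu" using ab(4) fin by simp
    ultimately show False using mx by simp
  qed
  show "{1..n-3} \<union> {n+1, 2*n-4} \<in> unrefinable_parts (tri n)"
  proof -
    have z: "0 \<notin> mu" using n7 unfolding mu_def by auto
    have "mu \<in> unrefinable_parts (tri n)"
      unfolding unrefinable_parts_def distinct_partition_def using fin sm c2 nr z by blast
    then show ?thesis unfolding mu_def .
  qed
qed


lemma m_val:
  fixes n :: nat and lam :: "nat set"
  assumes n7: "n \<ge> 7" and lamU: "lam \<in> Ubar (tri n)"
  shows "Max lam = 2*n-4" and "finite lam" and "0 \<notin> lam" and "\<not> refinable lam"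
    and "card (missing lam) = Max lam div 2" and "lam \<noteq> {}"
proof -
  have U: "lam \<in> unrefinable_parts (tri n)" and mx: "Max lam = Max (Max ` unrefinable_parts (tri n))"
    and cm: "card (missing lam) = Max lam div 2"
    using lamU unfolding Ubar_def maximal_unrefinable_def by auto
  then have fin: "finite lam" and z: "0 \<notin> lam" and sm: "\<Sum>lam = tri n" and c2: "card lam \<ge> 2"
    and nr: "\<not> refinable lam"
    unfolding unrefinable_parts_def distinct_partition_def by auto
  have ne: "lam \<noteq> {}" using c2 by auto
  show "finite lam" "0 \<notin> lam" "\<not> refinable lam" "card (missing lam) = Max lam div 2" "lam \<noteq> {}"
    using fin z nr cm ne by auto
  define m where "m = Max lam"
  have "Max ({1..n-3} \<union> {n+1, 2*n-4}) \<in> Max ` unrefinable_parts (tri n)"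
    using witness(1)[OF n7] by blast
  then have "Max ({1..n-3} \<union> {n+1, 2*n-4}) \<le> Max (Max ` unrefinable_parts (tri n))"
    by (rule Max_ge[OF finite_imageI[OF fin_U]])
  then have lo: "m \<ge> 2*n-4" using witness(2)[OF n7] mx m_def by simp
  note ss = sym_struct[OF fin z ne nr cm]
  have mlam: "m \<in> lam" using fin ne m_def by simp
  have ub: "\<And>x. x \<in> lam \<Longrightarrow> x \<le> m" using fin m_def by simp
  have eq: "tri n = m + \<Sum>{1..(m-1) div 2} + (\<Sum>x\<in>lam-{m}. x - min x (m-x))"
    using sum_struct[OF fin z mlam ub ss(1)[folded m_def] ss(2)[folded m_def]] sm by simp
  define D where "D = (\<Sum>x\<in>lam-{m}. x - min x (m-x))"
  define p where "p = (m-1) div 2"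
  obtain q where q: "n = q + 7" using n7 by (metis add.commute le_add_diff_inverse)
  have t2: "2 * tri n = n * (n+1)" unfolding tri_def by simp
  have e2: "n * (n+1) = 2*m + p*(p+1) + 2*D"
    using eq t2 dgauss[of p] unfolding D_def p_def by simp
  have bdL: "\<And>x. x \<in> lam - {m} \<Longrightarrow> x \<le> m" using ub by auto
  have "m \<le> 2*n-4"
  proof (rule ccontr)
    assume "\<not> m \<le> 2*n-4"
    then consider "m = 2*n-3" | "m = 2*n-2" | "m \<ge> 2*n-1" by linarith
    then show False
    proof cases
      case 1
      then have m1: "m = 2*q+11" and p1: "p = q+5" using q p_def by auto
      have "q*q + 15*q + 56 = 2*m + p*(p+1) + 2*D" using e2 q by (simp add: algebra_simps)
      then have "q*q + 15*q + 56 = 2*(2*q+11) + (q*q+11*q+30) + 2*D" using m1 p1 by (simp add: algebra_simps)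
      then have "D = 2" by (simp add: algebra_simps)
      moreover have "odd m" using m1 by simp
      ultimately show False using odd_D[of m "lam - {m}"] fin bdL D_def by simp
    next
      case 2
      then have m1: "m = 2*q+12" and p1: "p = q+5" using q p_def by auto
      have "q*q + 15*q + 56 = 2*m + p*(p+1) + 2*D" using e2 q by (simp add: algebra_simps)
      then have "q*q + 15*q + 56 = 2*(2*q+12) + (q*q+11*q+30) + 2*D" using m1 p1 by (simp add: algebra_simps)
      then have "2*D = 2" by (simp add: algebra_simps)
      moreover have "even m" using m1 by simp
      ultimately show False using even_D[of m "lam - {m}"] bdL D_def by auto
    next
      case 3
      then have "p \<ge> q+6" using q p_def by auto
      then have "p*(p+1) \<ge> (q+6)*(q+7)" using mult_le_mono[of "q+6" p "q+7" "p+1"] by simp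
      then have h2: "p*(p+1) \<ge> q*q + 13*q + 42" by (simp add: algebra_simps)
      have h1: "q*q + 15*q + 56 = 2*m + p*(p+1) + 2*D" using e2 q by (simp add: algebra_simps)
      have "m \<ge> 2*q + 13" using 3 q by simp
      then show False using h1 h2 by linarith
    qed
  qed
  then show "Max lam = 2*n-4" using lo m_def by simp
qed


lemma KN_main:
  fixes lam :: "nat set" and m h z :: nat
  assumes fin: "finite lam" and z0: "0 \<notin> lam" and mlam: "m \<in> lam"
    and ub: "\<And>x. x \<in> lam \<Longrightarrow> x \<le> m"
    and symm: "\<And>x. 0 < x \<Longrightarrow> x < m \<Longrightarrow> 2*x \<noteq> m \<Longrightarrow> (x \<in> lam \<longleftrightarrow> m - x \<notin> lam)"
    and mh: "m = 2*h" and hl: "h \<notin> lam" and cl: "card lam = h"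
    and ez: "enumerate (Sset lam) z = h"
  shows "(\<forall>i. 1 \<le> i \<and> i \<le> z \<longrightarrow>
            row_card (KN (Sset lam)) i = col_card (KN (Sset lam)) i + 1)
       \<and> (\<forall>i. z + 1 \<le> i \<and> i \<le> h \<longrightarrow>
            row_card (KN (Sset lam)) i = col_card (KN (Sset lam)) (i + 1))"
proof -
  define S where "S = Sset lam"
  have SS: "S = UNIV - lam" unfolding S_def Sset_def by simp
  have inf: "infinite S" unfolding SS using fin by (simp add: Diff_infinite_finite)
  have cS: "card (UNIV - S) = h" using SS cl by (simp add: Diff_Diff_Int)
  define rk where "rk g = card {x\<in>lam. x < g}" for g
  have memKN: "\<And>i j. (i, j) \<in> KN S \<longleftrightarrow> 1 \<le> i \<and> i \<le> h \<and> 1 \<le> j \<and>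
      (\<exists>g\<in>lam. rk g = h - i \<and> j \<le> card {s\<in>S. s < g})"
  proof -
    fix i j
    have e: "\<And>g. {x. x \<notin> S \<and> x < g} = {x\<in>lam. x < g}" using SS by auto
    show "(i, j) \<in> KN S \<longleftrightarrow> 1 \<le> i \<and> i \<le> h \<and> 1 \<le> j \<and>
      (\<exists>g\<in>lam. rk g = h - i \<and> j \<le> card {s\<in>S. s < g})"
      unfolding KN_def cS rk_def using e SS by auto
  qed
  have finb: "\<And>P. finite {x\<in>lam. P x}" using fin by simp
  have rk_inj: "\<And>g g'. g \<in> lam \<Longrightarrow> g' \<in> lam \<Longrightarrow> rk g = rk g' \<Longrightarrow> g = g'"
  proof -
    have lt: "rk g < rk g'" if "g \<in> lam" "g' \<in> lam" "g < g'" for g g'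
      unfolding rk_def by (rule psubset_card_mono[OF finb]) (use that in auto)
    fix g g' assume "g \<in> lam" "g' \<in> lam" "rk g = rk g'"
    then show "g = g'" using lt by (metis less_irrefl nat_neq_iff)
  qed
  have split: "\<And>g. g \<in> lam \<Longrightarrow> rk g + card {x\<in>lam. g < x} + 1 = h"
  proof -
    fix g assume g: "g \<in> lam"
    have "lam = insert g ({x\<in>lam. x < g} \<union> {x\<in>lam. g < x})" using g by auto
    then have "card lam = card (insert g ({x\<in>lam. x < g} \<union> {x\<in>lam. g < x}))" by simp
    also have "\<dots> = card ({x\<in>lam. x < g} \<union> {x\<in>lam. g < x}) + 1"
      using finb by (subst card_insert_disjoint) auto
    also have "card ({x\<in>lam. x < g} \<union> {x\<in>lam. g < x}) = rk g + card {x\<in>lam. g < x}"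
      unfolding rk_def by (rule card_Un_disjoint[OF finb finb]) auto
    finally show "rk g + card {x\<in>lam. g < x} + 1 = h" using cl by simp
  qed
  have L1: "\<And>s. card {x\<in>lam. s < x} = card {x\<in>S. x < m - s \<and> x \<noteq> h}"
  proof -
    fix s
    have "bij_betw (\<lambda>x. m - x) {x\<in>lam. s < x} {x\<in>S. x < m - s \<and> x \<noteq> h}"
    proof (rule bij_betw_byWitness[where f' = "\<lambda>x. m - x"])
      show "\<forall>a\<in>{x\<in>lam. s < x}. m - (m - a) = a" using ub by auto
      show "\<forall>a\<in>{x\<in>S. x < m - s \<and> x \<noteq> h}. m - (m - a) = a" by auto
      show "(\<lambda>x. m - x) ` {x\<in>lam. s < x} \<subseteq> {x\<in>S. x < m - s \<and> x \<noteq> h}"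
      proof
        fix y assume "y \<in> (\<lambda>x. m - x) ` {x\<in>lam. s < x}"
        then obtain a where a: "a \<in> lam" "s < a" "y = m - a" by auto
        have am: "a \<le> m" using ub a by simp
        have "a \<noteq> h" using a hl by auto
        have "y \<in> S"
        proof (cases "a = m")
          case True then show ?thesis using a z0 SS by simp
        next
          case False
          have "0 < a" using a z0 by (auto intro: gr0I)
          then have "m - a \<notin> lam" using symm[of a] a am False \<open>a \<noteq> h\<close> mh by auto
          then show ?thesis using a SS by simp
        qed
        moreover have "y < m - s" using a am by simp
        moreover have "y \<noteq> h" using a am mh \<open>a \<noteq> h\<close> by auto
        ultimately show "y \<in> {x\<in>S. x < m - s \<and> x \<noteq> h}" by simp
      qed
      show "(\<lambda>x. m - x) ` {x\<in>S. x < m - s \<and> x \<noteq> h} \<subseteq> {x\<in>lam. s < x}"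
      proof
        fix y assume "y \<in> (\<lambda>x. m - x) ` {x\<in>S. x < m - s \<and> x \<noteq> h}"
        then obtain a where a: "a \<in> S" "a < m - s" "a \<noteq> h" "y = m - a" by auto
        have "y \<in> lam"
        proof (cases "a = 0")
          case True then show ?thesis using a mlam by simp
        next
          case False
          then have "a \<notin> lam" using a SS by simp
          then show ?thesis using symm[of a] a False mh by auto
        qed
        moreover have "s < y" using a by simp
        ultimately show "y \<in> {x\<in>lam. s < x}" by simp
      qed
    qed
    then show "card {x\<in>lam. s < x} = card {x\<in>S. x < m - s \<and> x \<noteq> h}" by (rule bij_betw_same_card)
  qed
  have row: "\<And>i g. 1 \<le> i \<Longrightarrow> i \<le> h \<Longrightarrow> g \<in> lam \<Longrightarrow> rk g = h - i \<Longrightarrow>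
      row_card (KN S) i = card {s\<in>S. s < g}"
  proof -
    fix i g assume i: "1 \<le> i" "i \<le> h" and g: "g \<in> lam" "rk g = h - i"
    have "{j. (i, j) \<in> KN S} = {1..card {s\<in>S. s < g}}"
    proof (rule set_eqI)
      fix j show "j \<in> {j. (i, j) \<in> KN S} \<longleftrightarrow> j \<in> {1..card {s\<in>S. s < g}}"
        unfolding memKN using i g by (auto; metis rk_inj)
    qed
    then show "row_card (KN S) i = card {s\<in>S. s < g}" unfolding row_card_def by simp
  qed
  have rk_lt: "\<And>g. g \<in> lam \<Longrightarrow> rk g < h" using split by fastforce
  have col: "\<And>j. 1 \<le> j \<Longrightarrow> col_card (KN S) j = card {g\<in>lam. enumerate S (j-1) < g}"
  proof -
    fix j :: nat assume j: "1 \<le> j"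
    have e: "{i. (i, j) \<in> KN S} = (\<lambda>g. h - rk g) ` {g\<in>lam. enumerate S (j-1) < g}"
    proof (rule set_eqI)
      fix i show "i \<in> {i. (i, j) \<in> KN S} \<longleftrightarrow> i \<in> (\<lambda>g. h - rk g) ` {g\<in>lam. enumerate S (j-1) < g}"
      proof
        assume "i \<in> {i. (i, j) \<in> KN S}"
        then obtain g where "1 \<le> i" "i \<le> h" "g \<in> lam" "rk g = h - i" "j \<le> card {s\<in>S. s < g}"
          unfolding memKN by auto
        moreover then have "enumerate S (j-1) < g" using enum_le_card[OF inf, of j g] j by simp
        ultimately show "i \<in> (\<lambda>g. h - rk g) ` {g\<in>lam. enumerate S (j-1) < g}"
          by (auto intro!: image_eqI[where x = g])
      next
        assume "i \<in> (\<lambda>g. h - rk g) ` {g\<in>lam. enumerate S (j-1) < g}"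
        then obtain g where g: "g \<in> lam" "enumerate S (j-1) < g" "i = h - rk g" by auto
        have "j \<le> card {s\<in>S. s < g}" using enum_le_card[OF inf, of j g] j g by simp
        moreover have "rk g < h" using rk_lt g by simp
        ultimately show "i \<in> {i. (i, j) \<in> KN S}" unfolding memKN using g j by auto
      qed
    qed
    have "inj_on (\<lambda>g. h - rk g) {g\<in>lam. enumerate S (j-1) < g}"
    proof (rule inj_onI)
      fix g g' assume "g \<in> {g\<in>lam. enumerate S (j-1) < g}" "g' \<in> {g\<in>lam. enumerate S (j-1) < g}"
        "h - rk g = h - rk g'"
      then show "g = g'" using rk_lt rk_inj by (metis (no_types, lifting) diff_diff_cancel less_imp_le mem_Collect_eq)
    qed
    then show "col_card (KN S) j = card {g\<in>lam. enumerate S (j-1) < g}"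
      unfolding col_card_def e by (rule card_image)
  qed
  have hS: "h \<in> S" using hl SS by simp
  have zh: "z \<le> h"
  proof -
    have "card {x\<in>S. x < h} = z" using enum_card[OF inf, of z] ez[folded S_def] by simp
    moreover have "card {x\<in>S. x < h} \<le> card {..<h}" by (rule card_mono) auto
    ultimately show ?thesis by simp
  qed
  have cSm: "card {x\<in>S. x < m} = h + 1"
  proof -
    have "{x\<in>S. x < m} = {..<m} - (lam - {m})" using SS ub mlam by auto
    moreover have "card (lam - {m}) = h - 1" using cl mlam fin by simp
    moreover have "lam - {m} \<subseteq> {..<m}" using ub by fastforce
    moreover have "h \<ge> 1" using hl mlam mh by (cases h) auto
    ultimately show ?thesis using fin mh by (simp add: card_Diff_subset)
  qed
  have enlt: "\<And>i. i \<le> h \<Longrightarrow> enumerate S i < m"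
  proof (rule ccontr)
    fix i assume i: "i \<le> h" and "\<not> enumerate S i < m"
    then have "{x\<in>S. x < m} \<subseteq> {x\<in>S. x < enumerate S i}" by auto
    then have "card {x\<in>S. x < m} \<le> card {x\<in>S. x < enumerate S i}" by (rule card_mono[OF fin_below])
    then show False using cSm enum_card[OF inf, of i] i by simp
  qed
  have inS: "\<And>i. enumerate S i \<in> S" using enumerate_in_set[OF inf] by simp
  have part1: "\<forall>i. 1 \<le> i \<and> i \<le> z \<longrightarrow> row_card (KN S) i = col_card (KN S) i + 1"
  proof (intro allI impI)
    fix i assume i: "1 \<le> i \<and> i \<le> z"
    define s where "s = enumerate S (i-1)"
    have sh: "s < h" unfolding s_def using ez[folded S_def] inf i by (metis enumerate_mono diff_less less_le_trans zero_less_one)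
    have gl: "m - s \<in> lam"
    proof (cases "s = 0")
      case True then show ?thesis using mlam by simp
    next
      case False
      have "s \<notin> lam" using inS[of "i-1"] SS s_def by simp
      then show ?thesis using symm[of s] False sh mh by auto
    qed
    have "card {x\<in>lam. m - s < x} = card {x\<in>S. x < s \<and> x \<noteq> h}" using L1[of "m - s"] sh mh by simp
    also have "{x\<in>S. x < s \<and> x \<noteq> h} = {x\<in>S. x < s}" using sh by auto
    also have "card {x\<in>S. x < s} = i - 1" unfolding s_def by (rule enum_card[OF inf])
    finally have "rk (m - s) = h - i" using split[OF gl] i by simp
    then have r: "row_card (KN S) i = card {x\<in>S. x < m - s}" using row[of i "m-s"] i zh gl by simp
    have c: "col_card (KN S) i = card {x\<in>S. x < m - s \<and> x \<noteq> h}"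
      using col[of i] i L1[of s] s_def by simp
    have "{x\<in>S. x < m - s} = insert h {x\<in>S. x < m - s \<and> x \<noteq> h}" using hS sh mh by auto
    then have "card {x\<in>S. x < m - s} = card {x\<in>S. x < m - s \<and> x \<noteq> h} + 1"
      using fin_below[of S "m - s"] by (simp add: finite_subset)
    then show "row_card (KN S) i = col_card (KN S) i + 1" using r c by simp
  qed
  have part2: "\<forall>i. z + 1 \<le> i \<and> i \<le> h \<longrightarrow> row_card (KN S) i = col_card (KN S) (i + 1)"
  proof (intro allI impI)
    fix i assume i: "z + 1 \<le> i \<and> i \<le> h"
    define s where "s = enumerate S i"
    have sh: "h < s" unfolding s_def using ez[folded S_def] inf i by (metis enumerate_mono Suc_eq_plus1 Suc_le_lessD)
    have sm: "s < m" unfolding s_def using enlt i by simp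
    have gl: "m - s \<in> lam"
    proof -
      have "s \<notin> lam" using inS[of i] SS s_def by simp
      then show ?thesis using symm[of s] sh sm mh by auto
    qed
    have "card {x\<in>lam. m - s < x} = card {x\<in>S. x < s \<and> x \<noteq> h}" using L1[of "m - s"] sm by simp
    also have "{x\<in>S. x < s} = insert h {x\<in>S. x < s \<and> x \<noteq> h}" using hS sh by auto
    then have "card {x\<in>S. x < s} = card {x\<in>S. x < s \<and> x \<noteq> h} + 1"
      using fin_below[of S s] by (simp add: finite_subset)
    then have "card {x\<in>S. x < s \<and> x \<noteq> h} = i - 1" using enum_card[OF inf, of i] s_def by simp
    finally have "rk (m - s) = h - i" using split[OF gl] i by simp
    then have r: "row_card (KN S) i = card {x\<in>S. x < m - s}" using row[of i "m-s"] i gl by simp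
    have c: "col_card (KN S) (i+1) = card {x\<in>S. x < m - s \<and> x \<noteq> h}"
      using col[of "i+1"] L1[of s] s_def by simp
    have "{x\<in>S. x < m - s \<and> x \<noteq> h} = {x\<in>S. x < m - s}" using sh mh by auto
    then show "row_card (KN S) i = col_card (KN S) (i + 1)" using r c by simp
  qed
  show ?thesis using part1 part2 S_def by simp
qed


theorem lemma3p6:
  fixes k n z :: nat and lam :: "nat set"
  assumes "k \<ge> 4" and "n = 2 * k - 1"
    and "lam \<in> Ubar (tri n)"
    and "enumerate (Sset lam) z = n - 2"
  shows "(\<forall>i. 1 \<le> i \<and> i \<le> z \<longrightarrow>
            row_card (KN (Sset lam)) i = col_card (KN (Sset lam)) i + 1)
       \<and> (\<forall>i. z + 1 \<le> i \<and> i \<le> n - 2 \<longrightarrow>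
            row_card (KN (Sset lam)) i = col_card (KN (Sset lam)) (i + 1))"
proof -
  have n7: "n \<ge> 7" using assms(1,2) by simp
  note mv = m_val[OF n7 assms(3)]
  define m where "m = Max lam"
  define h where "h = n - 2"
  have mh: "m = 2*h" using mv(1) m_def h_def by simp
  note ss = sym_struct[OF mv(2,3,6,4,5)]
  have mlam: "m \<in> lam" using mv(2,6) m_def by simp
  have ub: "\<And>x. x \<in> lam \<Longrightarrow> x \<le> m" using mv(2) m_def by simp
  have hl: "h \<notin> lam" using ss(2) mh m_def by simp
  have sub: "lam \<subseteq> {1..m}" using ub mv(3) by (auto simp: Suc_le_eq) (metis neq0_conv)
  have "card (missing lam) = m - card lam"
    unfolding missing_def m_def[symmetric] using sub mv(2) by (simp add: card_Diff_subset)
  then have cl: "card lam = h" using mv(5) m_def mh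
    by (metis card_mono[OF finite_atLeastAtMost sub] card_atLeastAtMost diff_Suc_1
        diff_diff_cancel mult_2 nonzero_mult_div_cancel_left zero_neq_numeral add_diff_cancel_left')
  have "(\<forall>i. 1 \<le> i \<and> i \<le> z \<longrightarrow>
            row_card (KN (Sset lam)) i = col_card (KN (Sset lam)) i + 1)
       \<and> (\<forall>i. z + 1 \<le> i \<and> i \<le> h \<longrightarrow>
            row_card (KN (Sset lam)) i = col_card (KN (Sset lam)) (i + 1))"
    using KN_main[OF mv(2,3) mlam ub ss(1)[folded m_def] mh hl cl] assms(4) h_def by blast
  then show ?thesis using h_def by simp
qed

end
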